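(* Let $P$ be a convexly independent finite point set in the plane, let $G=(P,E)$ be a locally Gabriel graph on $P$, and let $p_1,p_2\in P$ be antipodal. Construct $U,V,E_1,E_2,G'_1,G'_2$ as described in the context (for any admissible choice of the assignment of edges to $E_1$ or $E_2$). Then both $G'_1$ and $G'_2$ are path restricted ordered bipartite graphs.
   Context: A finite point set $P\subset\mathbb{R}^2$ is convexly independent if no point of $P$ lies in the convex hull of the others. $G=(P,E)$ is a locally Gabriel graph if two edges $\{u,v\},\{u,w\}\in E$ sharing an endpoint $u$ can coexist only if $\angle uwv<\pi/2$ and $\angle uvw<\pi/2$ (equivalently, for each edge $\{u,v\}$ the disk with diameter $\overline{uv}$ contains no other neighbor of $u$ or $v$). Points $p_1,p_2\in P$ are antipodal if there are parallel lines through $p_1$ and $p_2$ with all of $P$ between them. Construction: let $U$ and $V$ be the sets of points of $P\setminus\{p_1,p_2\}$ lying on the two (open) sides of the line $p_1p_2$. Traversing each of the two boundary chains of the convex hull from $p_1$ to $p_2$, list $U=\{u_1,\dots,u_{n_1}\}$ and $V=\{v_1,\dots,v_{n_2}\}$ in order of appearance, and order them by $u_i<u_k\iff i<k$, $v_j<v_l\iff j<l$; put $v_0:=p_1$, $v_{n_2+1}:=p_2$. Let $E'$ be the set of edges of $G$ with one endpoint in $U$ and one in $V$. For $(u_i,v_j)\in E'$ at least one of $\angle u_iv_jv_{j-1}$, $\angle u_iv_jv_{j+1}$ is less than $\pi/2$; put the edge in $E_1$ if $\angle u_iv_jv_{j-1}<\pi/2$, in $E_2$ if $\angle u_iv_jv_{j+1}<\pi/2$,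 and into either one (arbitrarily) if both hold. $G_1=(U,V,E_1)$ carries the orders above; $G'_1$ is obtained from $G_1$ by deleting, for each $v\in V$ having at least one $E_1$-edge, the $E_1$-edge joining $v$ to its largest neighbor in $U$. $G_2=(U,V,E_2)$ carries the reversed orders on $U$ and on $V$; $G'_2$ is obtained from $G_2$ by deleting, for each $v\in V$ having at least one $E_2$-edge, the $E_2$-edge joining $v$ to its largest neighbor in $U$ with respect to the reversed order. Path restricted ordered bipartite graph: an ordered bipartite graph $(U,V,E)$ (disjoint totally ordered finite sets, $E\subseteq U\times V$) is path restricted if there is no forward path $w_0,\dots,w_m$ (distinct vertices alternating between $U$ and $V$, consecutive ones adjacent, with the $U$-vertices strictly increasing and the $V$-vertices strictly increasing along the sequence) together with an edge $\{w_0,x\}\in E$ such that $x$ lies in the part not containing $w_0$ and $w_1<x\le M$, where $M$ is the largest vertex of the path in that part (such an edge is called a back edge). *)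

theory Defs
  imports "HOL-Analysis.Analysis"
begin

type_synonym pt = "real \<times> real"

definition angle3 :: "pt \<Rightarrow> pt \<Rightarrow> pt \<Rightarrow> real" where
  "angle3 a b c = arccos (inner (a - b) (c - b) / (norm (a - b) * norm (c - b)))"

definition cross :: "pt \<Rightarrow> pt \<Rightarrow> real" where
  "cross x y = fst x * snd y - snd x * fst y"

definition convexly_independent :: "pt set \<Rightarrow> bool" where
  "convexly_independent P \<longleftrightarrow> (\<forall>p\<in>P. p \<notin> convex hull (P - {p}))"

definition is_graph :: "pt set \<Rightarrow> pt set set \<Rightarrow> bool" where
  "is_graph P E \<longleftrightarrow> E \<subseteq> {{a, b} | a b. a \<in> P \<and> b \<in> P \<and> a \<noteq> b}"

definition locally_gabriel :: "pt set \<Rightarrow> pt set set \<Rightarrow> bool" where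
  "locally_gabriel P E \<longleftrightarrow> is_graph P E \<and>
     (\<forall>u v w. {u, v} \<in> E \<and> {u, w} \<in> E \<and> v \<noteq> w \<longrightarrow>
        angle3 u w v < pi / 2 \<and> angle3 u v w < pi / 2)"

text \<open>Parallel lines through p1 and p2 (orthogonal to n) with all of P between them.\<close>
definition antipodal :: "pt set \<Rightarrow> pt \<Rightarrow> pt \<Rightarrow> bool" where
  "antipodal P p1 p2 \<longleftrightarrow> p1 \<in> P \<and> p2 \<in> P \<and>
     (\<exists>n. n \<noteq> 0 \<and> (\<forall>q\<in>P. inner n p1 \<le> inner n q \<and> inner n q \<le> inner n p2))"

definition hull_edge :: "pt set \<Rightarrow> pt \<Rightarrow> pt \<Rightarrow> bool" where
  "hull_edge P a b \<longleftrightarrow> a \<noteq> b \<and>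
     (\<exists>n. n \<noteq> 0 \<and> inner n a = inner n b \<and> (\<forall>q\<in>P. inner n q \<le> inner n a))"

definition boundary_chain :: "pt set \<Rightarrow> pt list \<Rightarrow> bool" where
  "boundary_chain P L \<longleftrightarrow> distinct L \<and> set L \<subseteq> P \<and>
     (\<forall>i. Suc i < length L \<longrightarrow> hull_edge P (L ! i) (L ! Suc i))"

definition list_less :: "'a list \<Rightarrow> 'a \<Rightarrow> 'a \<Rightarrow> bool" where
  "list_less xs a b \<longleftrightarrow> (\<exists>i j. i < j \<and> j < length xs \<and> xs ! i = a \<and> xs ! j = b)"

definition strict_total_on :: "'a set \<Rightarrow> ('a \<Rightarrow> 'a \<Rightarrow> bool) \<Rightarrow> bool" where
  "strict_total_on A lt \<longleftrightarrow>
     (\<forall>x\<in>A. \<not> lt x x) \<and>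
     (\<forall>x\<in>A. \<forall>y\<in>A. \<forall>z\<in>A. lt x y \<and> lt y z \<longrightarrow> lt x z) \<and>
     (\<forall>x\<in>A. \<forall>y\<in>A. x \<noteq> y \<longrightarrow> lt x y \<or> lt y x)"

definition ordered_bipartite :: "'a set \<Rightarrow> 'a set \<Rightarrow> ('a \<Rightarrow> 'a \<Rightarrow> bool) \<Rightarrow> ('a \<Rightarrow> 'a \<Rightarrow> bool)
    \<Rightarrow> ('a \<times> 'a) set \<Rightarrow> bool" where
  "ordered_bipartite U V ltU ltV E \<longleftrightarrow> finite U \<and> finite V \<and> U \<inter> V = {} \<and> E \<subseteq> U \<times> V \<and>
     strict_total_on U ltU \<and> strict_total_on V ltV"

definition badj :: "('a \<times> 'a) set \<Rightarrow> 'a \<Rightarrow> 'a \<Rightarrow> bool" where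
  "badj E a b \<longleftrightarrow> (a, b) \<in> E \<or> (b, a) \<in> E"

definition part_lt :: "'a set \<Rightarrow> ('a \<Rightarrow> 'a \<Rightarrow> bool) \<Rightarrow> ('a \<Rightarrow> 'a \<Rightarrow> bool) \<Rightarrow> 'a \<Rightarrow> 'a \<Rightarrow> bool" where
  "part_lt U ltU ltV a b = (if a \<in> U then ltU a b else ltV a b)"

definition same_part :: "'a set \<Rightarrow> 'a set \<Rightarrow> 'a \<Rightarrow> 'a \<Rightarrow> bool" where
  "same_part U V a b \<longleftrightarrow> (a \<in> U \<and> b \<in> U) \<or> (a \<in> V \<and> b \<in> V)"

definition forward_path :: "'a set \<Rightarrow> 'a set \<Rightarrow> ('a \<Rightarrow> 'a \<Rightarrow> bool) \<Rightarrow> ('a \<Rightarrow> 'a \<Rightarrow> bool)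
    \<Rightarrow> ('a \<times> 'a) set \<Rightarrow> 'a list \<Rightarrow> bool" where
  "forward_path U V ltU ltV E ws \<longleftrightarrow> 2 \<le> length ws \<and> distinct ws \<and>
     (\<forall>i. Suc i < length ws \<longrightarrow>
        ((ws ! i \<in> U \<and> ws ! Suc i \<in> V) \<or> (ws ! i \<in> V \<and> ws ! Suc i \<in> U)) \<and>
        badj E (ws ! i) (ws ! Suc i)) \<and>
     (\<forall>i j. i < j \<and> j < length ws \<and> ws ! i \<in> U \<and> ws ! j \<in> U \<longrightarrow> ltU (ws ! i) (ws ! j)) \<and>
     (\<forall>i j. i < j \<and> j < length ws \<and> ws ! i \<in> V \<and> ws ! j \<in> V \<longrightarrow> ltV (ws ! i) (ws ! j))"

text \<open>A back edge of the forward path ws: an edge {w_0, x} with x in the part not containing w_0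
  and w_1 < x <= M, M the largest path vertex in that part (x <= M iff x <= some path
  vertex of that part).\<close>
definition back_edge :: "'a set \<Rightarrow> 'a set \<Rightarrow> ('a \<Rightarrow> 'a \<Rightarrow> bool) \<Rightarrow> ('a \<Rightarrow> 'a \<Rightarrow> bool)
    \<Rightarrow> ('a \<times> 'a) set \<Rightarrow> 'a list \<Rightarrow> 'a \<Rightarrow> bool" where
  "back_edge U V ltU ltV E ws x \<longleftrightarrow> badj E (ws ! 0) x \<and>
     (if ws ! 0 \<in> U then x \<in> V else x \<in> U) \<and>
     part_lt U ltU ltV (ws ! 1) x \<and>
     (\<exists>k < length ws. same_part U V (ws ! k) x \<and>
        (x = ws ! k \<or> part_lt U ltU ltV x (ws ! k)))"

definition path_restricted :: "'a set \<Rightarrow> 'a set \<Rightarrow> ('a \<Rightarrow> 'a \<Rightarrow> bool) \<Rightarrow> ('a \<Rightarrow> 'a \<Rightarrow> bool)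
    \<Rightarrow> ('a \<times> 'a) set \<Rightarrow> bool" where
  "path_restricted U V ltU ltV E \<longleftrightarrow> ordered_bipartite U V ltU ltV E \<and>
     \<not> (\<exists>ws x. forward_path U V ltU ltV E ws \<and> back_edge U V ltU ltV E ws x)"

text \<open>For each v having at least one edge in F, delete the edge joining v to its largest
  (w.r.t. ltU) neighbour: an edge (u,v) survives iff v has a neighbour larger than u.\<close>
definition delete_max_edges :: "('a \<Rightarrow> 'a \<Rightarrow> bool) \<Rightarrow> ('a \<times> 'a) set \<Rightarrow> ('a \<times> 'a) set" where
  "delete_max_edges ltU F = {(u, v) \<in> F. \<exists>u'. (u', v) \<in> F \<and> ltU u u'}"

end

theory Submission
  imports Defs
begin

lemma angle_acute_inner:
  assumes "angle3 a b c < pi / 2"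
  shows "inner (a - b) (c - b) > 0"
proof (rule ccontr)
  assume nz: "\<not> inner (a - b) (c - b) > 0"
  define N where "N = norm (a - b) * norm (c - b)"
  define t where "t = inner (a - b) (c - b) / N"
  have N0: "N \<ge> 0" unfolding N_def by simp
  have cs: "\<bar>inner (a - b) (c - b)\<bar> \<le> N" unfolding N_def by (rule Cauchy_Schwarz_ineq2)
  have t1: "\<bar>t\<bar> \<le> 1"
  proof (cases "N = 0")
    case True then have "t = 0" unfolding t_def by (simp only: True div_by_0)
    then show ?thesis by simp
  next
    case False
    then have pos: "N > 0" using N0 by linarith
    have "\<bar>t\<bar> = \<bar>inner (a - b) (c - b)\<bar> / N" unfolding t_def using pos by (simp add: abs_divide)
    also have "\<dots> \<le> 1" using cs pos by (simp add: divide_le_eq_1_pos)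
    finally show ?thesis .
  qed
  have t0: "t \<le> 0" unfolding t_def by (rule divide_nonpos_nonneg) (use nz N0 in auto)
  have "angle3 a b c = arccos t" by (simp add: angle3_def t_def N_def)
  then have lt: "arccos t < pi/2" using assms by simp
  have ge: "0 \<le> arccos t" using t1 by (intro arccos_lbound) auto
  have "cos (arccos t) > 0" using lt ge by (intro cos_gt_zero_pi) auto
  moreover have "cos (arccos t) = t" using t1 by (intro cos_arccos) auto
  ultimately show False using t0 by simp
qed

lemma pos2: "0 < a \<Longrightarrow> 0 < b \<Longrightarrow> 0 < c \<Longrightarrow> 0 < d \<Longrightarrow> 0 < a * b + c * (d::real)"
  by (simp add: add_pos_pos)

lemma pos4: "0 < a \<Longrightarrow> 0 < b \<Longrightarrow> 0 < c \<Longrightarrow> 0 < d \<Longrightarrow> 0 < e \<Longrightarrow> 0 < f \<Longrightarrow> 0 < g \<Longrightarrow> 0 < h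
   \<Longrightarrow> 0 < a * b + c * d + e * f + g * (h::real)"
  by (simp add: add_pos_pos)

definition orient :: "pt \<Rightarrow> pt \<Rightarrow> pt \<Rightarrow> real" where
  "orient a b c = cross (b - a) (c - a)"

lemma quad_identity:
  fixes a b c d :: pt
  shows "orient b c d * inner (b - a) (d - a) + orient a b d * inner (b - c) (d - c)
       + orient a c d * inner (a - b) (c - b) + orient a b c * inner (c - d) (a - d) = 0"
proof -
  obtain a1 a2 where a: "a = (a1, a2)" by (cases a)
  obtain b1 b2 where b: "b = (b1, b2)" by (cases b)
  obtain c1 c2 where c: "c = (c1, c2)" by (cases c)
  obtain d1 d2 where d: "d = (d1, d2)" by (cases d)
  show ?thesis unfolding a b c d orient_def cross_def by (simp add: inner_real_def) algebra
qed


lemma mono1: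
  fixes x a b c :: pt
  assumes "s * orient x c b > 0" "s * orient x b a > 0" "s * orient x c a > 0"
    and "a \<noteq> x" and "inner (a - x) (c - x) > 0"
  shows "inner (a - x) (b - x) > 0"
proof -
  obtain a1 a2 where a: "a = (a1, a2)" by (cases a)
  obtain b1 b2 where b: "b = (b1, b2)" by (cases b)
  obtain c1 c2 where c: "c = (c1, c2)" by (cases c)
  obtain x1 x2 where x: "x = (x1, x2)" by (cases x)
  have id: "inner (a - x) (b - x) * (s * orient x c a) = (s * orient x b a) * inner (a - x) (c - x) + (s * orient x c b) * inner (a - x) (a - x)"
    unfolding a b c x orient_def cross_def by (simp add: inner_real_def) algebra
  have aa: "inner (a - x) (a - x) > 0" using assms(4) by simp
  have "(s * orient x b a) * inner (a - x) (c - x) + (s * orient x c b) * inner (a - x) (a - x) > 0"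
    by (rule pos2) (use assms aa in auto)
  then have "inner (a - x) (b - x) * (s * orient x c a) > 0" using id by simp
  then show ?thesis using assms(3) by (simp add: zero_less_mult_iff)
qed

lemma mono2:
  fixes x a b c :: pt
  assumes "s * orient x c b > 0" "s * orient x b a > 0" "s * orient x c a > 0"
    and "c \<noteq> x" and "inner (a - x) (c - x) > 0"
  shows "inner (c - x) (b - x) > 0"
proof -
  obtain a1 a2 where a: "a = (a1, a2)" by (cases a)
  obtain b1 b2 where b: "b = (b1, b2)" by (cases b)
  obtain c1 c2 where c: "c = (c1, c2)" by (cases c)
  obtain x1 x2 where x: "x = (x1, x2)" by (cases x)
  have id: "inner (c - x) (b - x) * (s * orient x c a) = (s * orient x b a) * inner (c - x) (c - x) + (s * orient x c b) * inner (a - x) (c - x)"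
    unfolding a b c x orient_def cross_def by (simp add: inner_real_def) algebra
  have cc: "inner (c - x) (c - x) > 0" using assms(4) by simp
  have "(s * orient x b a) * inner (c - x) (c - x) + (s * orient x c b) * inner (a - x) (c - x) > 0"
    by (rule pos2) (use assms cc in auto)
  then have "inner (c - x) (b - x) * (s * orient x c a) > 0" using id by simp
  then show ?thesis using assms(3) by (simp add: zero_less_mult_iff)
qed

lemma quad_contra:
  fixes a b c d :: pt
  assumes "s * orient a b c > 0" "s * orient a b d > 0" "s * orient a c d > 0" "s * orient b c d > 0"
    and "inner (b - a) (d - a) > 0" "inner (a - b) (c - b) > 0" "inner (b - c) (d - c) > 0" "inner (c - d) (a - d) > 0"
  shows False
proof -
  have "(s * orient b c d) * inner (b - a) (d - a) + (s * orient a b d) * inner (b - c) (d - c)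
       + (s * orient a c d) * inner (a - b) (c - b) + (s * orient a b c) * inner (c - d) (a - d) = 0"
  proof -
    have "s * (orient b c d * inner (b - a) (d - a) + orient a b d * inner (b - c) (d - c)
       + orient a c d * inner (a - b) (c - b) + orient a b c * inner (c - d) (a - d)) = 0"
      by (simp only: quad_identity mult_zero_right)
    then show ?thesis by (simp only: distrib_left mult.assoc)
  qed
  moreover have "(s * orient b c d) * inner (b - a) (d - a) + (s * orient a b d) * inner (b - c) (d - c)
       + (s * orient a c d) * inner (a - b) (c - b) + (s * orient a b c) * inner (c - d) (a - d) > 0"
    by (rule pos4) (use assms in auto)
  ultimately show False by simp
qed

lemma cross_trans:
  fixes p x y z :: pt
  assumes "s * cross p x > 0" "s * cross p y > 0" "s * cross p z > 0" "s * cross x y > 0" "s * cross y z > 0"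
  shows "s * cross x z > 0"
proof -
  obtain a1 a2 where a: "p = (a1, a2)" by (cases p)
  obtain b1 b2 where b: "x = (b1, b2)" by (cases x)
  obtain c1 c2 where c: "y = (c1, c2)" by (cases y)
  obtain x1 x2 where x: "z = (x1, x2)" by (cases z)
  have id: "(s * cross x z) * (s * cross p y) = (s * cross x y) * (s * cross p z) + (s * cross y z) * (s * cross p x)"
    unfolding a b c x cross_def by simp algebra
  have "(s * cross x y) * (s * cross p z) + (s * cross y z) * (s * cross p x) > 0"
    by (rule pos2) (use assms in auto)
  then have "(s * cross x z) * (s * cross p y) > 0" using id by simp
  then show ?thesis using assms(2) by (simp add: zero_less_mult_iff)
qed

lemma seg_in_hull:
  assumes "x \<in> S" "y \<in> S" "0 \<le> u" "u \<le> 1"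
  shows "(1 - u) *\<^sub>R x + u *\<^sub>R y \<in> convex hull S"
  by (rule convexD[OF convex_convex_hull]) (use assms hull_inc in auto)

lemma collinear_contra:
  fixes a b q :: pt
  assumes ci: "convexly_independent P" and P: "a \<in> P" "b \<in> P" "q \<in> P"
    and d: "a \<noteq> b" "a \<noteq> q" "b \<noteq> q" and col: "orient a b q = 0"
  shows False
proof -
  obtain a1 a2 where a: "a = (a1, a2)" by (cases a)
  obtain b1 b2 where b: "b = (b1, b2)" by (cases b)
  obtain q1 q2 where q: "q = (q1, q2)" by (cases q)
  define x where "x = b1 - a1"
  define y where "y = b2 - a2"
  define u where "u = q1 - a1"
  define v where "v = q2 - a2"
  define D where "D = x * x + y * y"
  have "x \<noteq> 0 \<or> y \<noteq> 0" using d(1) a b x_def y_def by auto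
  then have D: "D > 0" unfolding D_def
    by (simp add: sum_squares_gt_zero_iff)
  define t where "t = (u * x + v * y) / D"
  have col': "x * v = y * u"
    using col unfolding a b q orient_def cross_def x_def y_def u_def v_def by simp
  have e1: "(u * x + v * y) * x = u * D"
  proof -
    have "(u * x + v * y) * x = u * x * x + y * (x * v)" by (simp add: algebra_simps)
    also have "\<dots> = u * D" unfolding col' D_def by (simp add: algebra_simps)
    finally show ?thesis .
  qed
  have e2: "(u * x + v * y) * y = v * D"
  proof -
    have "(u * x + v * y) * y = x * (y * u) + v * y * y" by (simp add: algebra_simps)
    also have "\<dots> = v * D" unfolding col'[symmetric] D_def by (simp add: algebra_simps)
    finally show ?thesis .
  qed
  have "t * x = u" unfolding t_def using e1 D by (simp add: field_simps)
  then have h1: "q1 = (1 - t) * a1 + t * b1" unfolding x_def u_def by (simp add: algebra_simps)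
  have "t * y = v" unfolding t_def using e2 D by (simp add: field_simps)
  then have h2: "q2 = (1 - t) * a2 + t * b2" unfolding y_def v_def by (simp add: algebra_simps)
  have ci': "\<And>p. p \<in> P \<Longrightarrow> p \<notin> convex hull (P - {p})" using ci unfolding convexly_independent_def by blast
  consider "t \<le> 0" | "0 < t" "t < 1" | "1 \<le> t" by linarith
  then show False
  proof cases
    case 1
    then have t0: "t < 0" using h1 h2 d(2) a q by (cases "t = 0") auto
    define u where "u = - t / (1 - t)"
    have u: "0 \<le> u" "u \<le> 1" unfolding u_def using t0 by (auto simp: field_simps)
    have nz: "1 - t \<noteq> 0" using t0 by simp
    have cu: "1 - u = 1 / (1 - t)" unfolding u_def using nz by (simp add: field_simps)
    have "a1 = (q1 - t * b1) / (1 - t)" using h1 nz by (simp add: field_simps)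
    also have "\<dots> = q1 / (1 - t) - t * b1 / (1 - t)" by (simp add: diff_divide_distrib)
    also have "\<dots> = (1 - u) * q1 + u * b1" unfolding u_def using nz by (simp add: field_simps)
    finally have k1: "a1 = (1 - u) * q1 + u * b1" .
    have "a2 = (q2 - t * b2) / (1 - t)" using h2 nz by (simp add: field_simps)
    also have "\<dots> = q2 / (1 - t) - t * b2 / (1 - t)" by (simp add: diff_divide_distrib)
    also have "\<dots> = (1 - u) * q2 + u * b2" unfolding u_def using nz by (simp add: field_simps)
    finally have k2: "a2 = (1 - u) * q2 + u * b2" .
    have "a = (1 - u) *\<^sub>R q + u *\<^sub>R b"
      unfolding a b q using k1 k2 by simp
    moreover have "(1 - u) *\<^sub>R q + u *\<^sub>R b \<in> convex hull (P - {a})"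
      by (rule seg_in_hull) (use P d u in auto)
    ultimately show False using ci' P by auto
  next
    case 2
    have "q = (1 - t) *\<^sub>R a + t *\<^sub>R b" unfolding a b q using h1 h2 by simp
    moreover have "(1 - t) *\<^sub>R a + t *\<^sub>R b \<in> convex hull (P - {q})"
      by (rule seg_in_hull) (use P d 2 in auto)
    ultimately show False using ci' P by auto
  next
    case 3
    then have t1: "1 < t" using h1 h2 d(3) b q by (cases "t = 1") auto
    define u where "u = 1 / t"
    have u: "0 \<le> u" "u \<le> 1" unfolding u_def using t1 by auto
    have "b = (1 - u) *\<^sub>R a + u *\<^sub>R q"
      unfolding a b q u_def using t1 h1 h2 by (simp add: field_simps)
    moreover have "(1 - u) *\<^sub>R a + u *\<^sub>R q \<in> convex hull (P - {b})"
      by (rule seg_in_hull) (use P d u in auto)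
    ultimately show False using ci' P by auto
  qed
qed

definition Ed :: "real \<Rightarrow> pt set \<Rightarrow> pt \<Rightarrow> pt \<Rightarrow> bool" where
  "Ed s P a b \<longleftrightarrow> (\<forall>q\<in>P - {a, b}. s * orient a b q > 0)"

lemma hull_edge_side:
  fixes a b :: pt
  assumes ci: "convexly_independent P" and P: "a \<in> P" "b \<in> P" and he: "hull_edge P a b"
  shows "Ed 1 P a b \<or> Ed (-1) P a b"
proof -
  from he obtain n where n: "n \<noteq> 0" "inner n a = inner n b" "\<forall>q\<in>P. inner n q \<le> inner n a"
    and ab: "a \<noteq> b" unfolding hull_edge_def by blast
  obtain n1 n2 where nn: "n = (n1, n2)" by (cases n)
  obtain a1 a2 where a: "a = (a1, a2)" by (cases a)
  obtain b1 b2 where b: "b = (b1, b2)" by (cases b)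
  define x where "x = b1 - a1"
  define y where "y = b2 - a2"
  define k where "k = n2 * x - n1 * y"
  define D where "D = x * x + y * y"
  have "x \<noteq> 0 \<or> y \<noteq> 0" using ab a b x_def y_def by auto
  then have D: "D > 0" unfolding D_def by (simp add: sum_squares_gt_zero_iff)
  have nd: "n1 * x + n2 * y = 0" using n(2) unfolding nn a b x_def y_def
    by (simp add: algebra_simps)
  have k0: "k \<noteq> 0"
  proof
    assume k: "k = 0"
    have "n1 * D = x * (n1 * x + n2 * y) - y * k" unfolding D_def k_def by (simp add: algebra_simps)
    then have "n1 * D = 0" using nd k by simp
    then have "n1 = 0" using D by simp
    have "n2 * D = y * (n1 * x + n2 * y) + x * k" unfolding D_def k_def by (simp add: algebra_simps)
    then have "n2 * D = 0" using nd k by simp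
    then have "n2 = 0" using D by simp
    with \<open>n1 = 0\<close> show False using n(1) nn by (simp add: zero_prod_def)
  qed
  have key: "D * inner n (q - a) = k * orient a b q" for q :: pt
  proof -
    obtain q1 q2 where q: "q = (q1, q2)" by (cases q)
    define u where "u = q1 - a1"
    define v where "v = q2 - a2"
    have "D * inner n (q - a) = D * (n1 * u + n2 * v)" unfolding nn q a u_def v_def by simp
    also have "\<dots> = k * (x * v - y * u) + (u * x + v * y) * (n1 * x + n2 * y)"
      unfolding D_def k_def by (simp add: algebra_simps)
    also have "\<dots> = k * (x * v - y * u)" using nd by simp
    also have "\<dots> = k * orient a b q" unfolding orient_def cross_def a b q x_def y_def u_def v_def by simp
    finally show ?thesis .
  qed
  have neg: "k * orient a b q < 0" if q: "q \<in> P - {a, b}" for q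
  proof -
    have "orient a b q \<noteq> 0" using collinear_contra[OF ci P(1) P(2), of q] q ab by auto
    moreover have "inner n (q - a) \<le> 0" using n(3) q by (simp add: inner_diff_right)
    then have "D * inner n (q - a) \<le> 0" using D by (simp add: mult_nonneg_nonpos)
    ultimately show ?thesis using key[of q] k0 by (simp add: order_le_neq_trans)
  qed
  show ?thesis
  proof (cases "k > 0")
    case True
    then have "Ed (-1) P a b" unfolding Ed_def using neg by (auto simp: mult_less_0_iff)
    then show ?thesis by simp
  next
    case False
    then have "k < 0" using k0 by simp
    then have "Ed 1 P a b" unfolding Ed_def using neg by (auto simp: mult_less_0_iff)
    then show ?thesis by simp
  qed
qed

lemma orient_cyc: "orient a b c = orient b c a"
  by (cases a; cases b; cases c) (simp add: orient_def cross_def algebra_simps)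

lemma orient_swap: "orient b a c = - orient a b c"
  by (cases a; cases b; cases c) (simp add: orient_def cross_def algebra_simps)

lemma Ed_swap: "Ed s P a b \<Longrightarrow> Ed (- s) P b a"
  unfolding Ed_def
proof (intro ballI)
  fix q assume "\<forall>q\<in>P - {a, b}. 0 < s * orient a b q" "q \<in> P - {b, a}"
  then have "0 < s * orient a b q" by auto
  then show "0 < - s * orient b a q" using orient_swap[of b a q] by simp
qed

lemma Ed_sign:
  assumes "Ed s P a b" "Ed t P a b" "q \<in> P - {a, b}" "t = 1 \<or> t = -1" "s = 1 \<or> s = -1"
  shows "s = t"
proof -
  have "s * orient a b q > 0" "t * orient a b q > 0" using assms unfolding Ed_def by auto
  then show ?thesis using assms(4,5) by (auto simp: zero_less_mult_iff)
qed

lemma chain_sign: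
  assumes bc: "boundary_chain P L" and ci: "convexly_independent P"
    and e0: "Ed s P (L ! 0) (L ! 1)" and s: "s = 1 \<or> s = -1"
  shows "Suc i < length L \<Longrightarrow> Ed s P (L ! i) (L ! Suc i)"
proof (induction i)
  case 0 then show ?case using e0 by simp
next
  case (Suc i)
  have dist: "distinct L" and sub: "set L \<subseteq> P" using bc unfolding boundary_chain_def by auto
  have he: "hull_edge P (L ! Suc i) (L ! Suc (Suc i))" using bc Suc.prems unfolding boundary_chain_def by auto
  have inP: "L ! i \<in> P" "L ! Suc i \<in> P" "L ! Suc (Suc i) \<in> P" using sub Suc.prems by auto
  have IH: "Ed s P (L ! i) (L ! Suc i)" using Suc.IH Suc.prems by simp
  have ne: "L ! i \<noteq> L ! Suc i" "L ! i \<noteq> L ! Suc (Suc i)" "L ! Suc i \<noteq> L ! Suc (Suc i)"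
    using dist Suc.prems by (auto simp: nth_eq_iff_index_eq)
  obtain t where t: "t = 1 \<or> t = -1" "Ed t P (L ! Suc i) (L ! Suc (Suc i))"
    using hull_edge_side[OF ci inP(2,3) he] by blast
  have o1: "s * orient (L ! i) (L ! Suc i) (L ! Suc (Suc i)) > 0" using IH inP ne unfolding Ed_def by auto
  have o2: "t * orient (L ! Suc i) (L ! Suc (Suc i)) (L ! i) > 0" using t(2) inP ne unfolding Ed_def by auto
  have "orient (L ! Suc i) (L ! Suc (Suc i)) (L ! i) = orient (L ! i) (L ! Suc i) (L ! Suc (Suc i))"
    by (rule orient_cyc[symmetric])
  then have "s = t" using o1 o2 s t(1) by (auto simp: zero_less_mult_iff)
  then show ?case using t(2) by simp
qed

lemma pid_gen: "cross ((a - z) - (b - z)) (x - z) = orient z a x + orient b z x"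
proof -
  obtain a1 a2 where "a = (a1, a2)" by (cases a)
  moreover obtain b1 b2 where "b = (b1, b2)" by (cases b)
  moreover obtain x1 x2 where "x = (x1, x2)" by (cases x)
  moreover obtain z1 z2 where "z = (z1, z2)" by (cases z)
  ultimately show ?thesis by (simp add: orient_def cross_def algebra_simps)
qed

lemma orient_deg1: "orient a b b = 0"
  by (simp add: orient_def cross_def algebra_simps)

lemma orient_deg2: "orient b a b = 0"
  by (simp add: orient_def cross_def algebra_simps)

definition nx :: "nat \<Rightarrow> nat \<Rightarrow> nat" where
  "nx N i = (if Suc i < N then Suc i else 0)"

lemma viewpoint:
  fixes e :: "nat \<Rightarrow> pt"
  assumes N: "3 \<le> N"
    and E1: "\<And>t. 1 \<le> t \<Longrightarrow> Suc t < N \<Longrightarrow> s * orient (e 0) (e t) (e (Suc t)) > 0"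
    and E2: "\<And>t. 2 \<le> t \<Longrightarrow> t < N \<Longrightarrow> s * orient (e 0) (e 1) (e t) > 0"
    and E3: "\<And>t. 1 \<le> t \<Longrightarrow> t \<le> N - 2 \<Longrightarrow> s * orient (e (N - 1)) (e 0) (e t) > 0"
  shows "1 \<le> j \<Longrightarrow> j < k \<Longrightarrow> k < N \<Longrightarrow> s * orient (e 0) (e j) (e k) > 0"
proof -
  define p where "p = (e 1 - e 0) - (e (N - 1) - e 0)"
  have pid: "cross p (e t - e 0) = orient (e 0) (e 1) (e t) + orient (e (N - 1)) (e 0) (e t)" for t
    unfolding p_def by (rule pid_gen)
  have deg1: "orient (e 0) (e 1) (e 1) = 0" by (rule orient_deg1)
  have deg2: "orient (e (N - 1)) (e 0) (e (N - 1)) = 0" by (rule orient_deg2)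
  have left: "s * cross p (e t - e 0) > 0" if "1 \<le> t" "t < N" for t
  proof -
    have disj: "t = 1 \<or> t = N - 1 \<or> (2 \<le> t \<and> t \<le> N - 2)" using that N by linarith
    consider "t = 1" | "t = N - 1" | "2 \<le> t" "t \<le> N - 2" using disj by blast
    then show ?thesis
    proof cases
      case 1
      have "s * orient (e (N - 1)) (e 0) (e 1) > 0" using E3[of 1] N by simp
      then show ?thesis using pid[of t] deg1 1 by (simp add: distrib_left)
    next
      case 2
      have "s * orient (e 0) (e 1) (e (N - 1)) > 0" using E2[of "N - 1"] N by simp
      then show ?thesis using pid[of t] deg2 2 by (simp add: distrib_left)
    next
      case 3
      have "s * orient (e 0) (e 1) (e t) > 0" using E2[of t] 3 N by simp
      moreover have "s * orient (e (N - 1)) (e 0) (e t) > 0" using E3[of t] 3 N by simp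
      ultimately show ?thesis using pid[of t] by (simp add: distrib_left)
    qed
  qed
  have oc: "orient (e 0) (e j) (e k) = cross (e j - e 0) (e k - e 0)" for j k
    unfolding orient_def by simp
  have main: "\<forall>j. 1 \<le> j \<and> j < k \<and> k < N \<longrightarrow> s * cross (e j - e 0) (e k - e 0) > 0" for k
  proof (induction k)
    case 0 then show ?case by simp
  next
    case (Suc k)
    show ?case
    proof (intro allI impI)
      fix j assume j: "1 \<le> j \<and> j < Suc k \<and> Suc k < N"
      show "s * cross (e j - e 0) (e (Suc k) - e 0) > 0"
      proof (cases "j = k")
        case True
        then show ?thesis using E1[of k] j oc by simp
      next
        case False
        then have jk: "j < k" using j by simp
        have a: "s * cross (e j - e 0) (e k - e 0) > 0" using Suc.IH jk j by simp
        have b: "s * cross (e k - e 0) (e (Suc k) - e 0) > 0" using E1[of k] j jk oc by simp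
        show ?thesis
          by (rule cross_trans[where p = p and y = "e k - e 0"]) (use a b left j jk in auto)
      qed
    qed
  qed
  show "1 \<le> j \<Longrightarrow> j < k \<Longrightarrow> k < N \<Longrightarrow> s * orient (e 0) (e j) (e k) > 0"
    using main[of k] oc by simp
qed

lemma cycle_orient:
  fixes c :: "nat \<Rightarrow> pt"
  assumes N: "3 \<le> N"
    and edge: "\<And>i j. i < N \<Longrightarrow> j < N \<Longrightarrow> j \<noteq> i \<Longrightarrow> j \<noteq> nx N i \<Longrightarrow> s * orient (c i) (c (nx N i)) (c j) > 0"
    and ijk: "i < j" "j < k" "k < N"
  shows "s * orient (c i) (c j) (c k) > 0"
proof -
  define r where "r t = (if i + t < N then i + t else i + t - N)" for t
  define e where "e t = c (r t)" for t
  have r_lt: "r t < N" if "t < N" for t using that ijk unfolding r_def by auto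
  have r0: "r 0 = i" using ijk unfolding r_def by auto
  have rinj: "r t \<noteq> r t'" if "t < N" "t' < N" "t \<noteq> t'" for t t'
    using that ijk unfolding r_def by auto
  have rnx: "nx N (r t) = r (Suc t)" if "Suc t < N" for t
    using that ijk unfolding r_def nx_def by auto
  have rnx2: "nx N (r (N - 1)) = r 0"
    using ijk N unfolding r_def nx_def by auto
  have V: "s * orient (e 0) (e j') (e k') > 0" if "1 \<le> j'" "j' < k'" "k' < N" for j' k'
  proof (rule viewpoint[where N = N and e = e])
    show "3 \<le> N" by (rule N)
  next
    fix t assume t: "1 \<le> t" "Suc t < N"
    have "s * orient (c (r t)) (c (nx N (r t))) (c (r 0)) > 0"
      by (rule edge) (use t r_lt rinj[of 0 t] rinj[of 0 "Suc t"] rnx[of t] in auto)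
    then have "s * orient (c (r t)) (c (r (Suc t))) (c (r 0)) > 0" using rnx t by simp
    then show "s * orient (e 0) (e t) (e (Suc t)) > 0"
      unfolding e_def using orient_cyc[of "c (r 0)" "c (r t)" "c (r (Suc t))"] by simp
  next
    fix t assume t: "2 \<le> t" "t < N"
    have "s * orient (c (r 0)) (c (nx N (r 0))) (c (r t)) > 0"
      by (rule edge) (use t r_lt rinj[of t 0] rinj[of t 1] rnx[of 0] N in auto)
    then show "s * orient (e 0) (e 1) (e t) > 0" unfolding e_def using rnx[of 0] N by simp
  next
    fix t assume t: "1 \<le> t" "t \<le> N - 2"
    have "s * orient (c (r (N - 1))) (c (nx N (r (N - 1)))) (c (r t)) > 0"
      by (rule edge) (use t r_lt rinj[of t "N - 1"] rinj[of t 0] rnx2 N in auto)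
    then show "s * orient (e (N - 1)) (e 0) (e t) > 0" unfolding e_def using rnx2 by simp
  qed (use that in auto)
  have "r (j - i) = j" "r (k - i) = k" using ijk unfolding r_def by auto
  moreover have "s * orient (e 0) (e (j - i)) (e (k - i)) > 0" using V[of "j - i" "k - i"] ijk by auto
  ultimately show ?thesis unfolding e_def using r0 by simp
qed

definition cyc3 :: "nat \<Rightarrow> real \<Rightarrow> (nat \<Rightarrow> pt) \<Rightarrow> bool" where
  "cyc3 N s c \<longleftrightarrow> (\<forall>p q r. p < N \<and> q < N \<and> r < N \<and> ((p < q \<and> q < r) \<or> (q < r \<and> r < p) \<or> (r < p \<and> p < q))
      \<longrightarrow> s * orient (c p) (c q) (c r) > 0)"

lemma cyc3D: "cyc3 N s c \<Longrightarrow> p < N \<Longrightarrow> q < N \<Longrightarrow> r < N \<Longrightarrow> (p < q \<and> q < r) \<or> (q < r \<and> r < p) \<or> (r < p \<and> p < q)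
   \<Longrightarrow> s * orient (c p) (c q) (c r) > 0"
  unfolding cyc3_def by blast

lemma geomA:
  fixes c :: "nat \<Rightarrow> pt"
  assumes cy: "cyc3 N s c" and inj: "\<And>p q. p < N \<Longrightarrow> q < N \<Longrightarrow> p \<noteq> q \<Longrightarrow> c p \<noteq> c q"
    and pos: "PA < PAt" "PAt \<le> PX" "PX < PZ" "PZ < PY" "PY \<le> PC" "PC < PB" "PB < N"
    and h1: "inner (c PB - c PA) (c PAt - c PA) > 0"
    and h2: "inner (c PA - c PB) (c PC - c PB) > 0"
    and h3: "inner (c PZ - c PY) (c PB - c PY) > 0"
    and h4: "inner (c PY - c PZ) (c PX - c PZ) > 0"
  shows False
proof -
  note O = cyc3D[OF cy]
  have qa: "inner (c PZ - c PA) (c PB - c PA) > 0"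
  proof -
    have "inner (c PB - c PA) (c PZ - c PA) > 0"
    proof (rule mono1[where s = s and c = "c PAt"])
      show "s * orient (c PA) (c PAt) (c PZ) > 0" by (rule O) (use pos in linarith)+
      show "s * orient (c PA) (c PZ) (c PB) > 0" by (rule O) (use pos in linarith)+
      show "s * orient (c PA) (c PAt) (c PB) > 0" by (rule O) (use pos in linarith)+
      show "c PB \<noteq> c PA" by (rule inj) (use pos in linarith)+
    qed (rule h1)
    then show ?thesis by (simp add: inner_commute)
  qed
  have qb: "inner (c PY - c PB) (c PA - c PB) > 0"
  proof (cases "PY = PC")
    case True then show ?thesis using h2 by (simp add: inner_commute)
  next
    case False
    have "inner (c PA - c PB) (c PY - c PB) > 0"
    proof (rule mono2[where s = s and a = "c PC"])
      show "s * orient (c PB) (c PA) (c PY) > 0" by (rule O) (use pos in linarith)+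
      show "s * orient (c PB) (c PY) (c PC) > 0" by (rule O) (use pos False in linarith)+
      show "s * orient (c PB) (c PA) (c PC) > 0" by (rule O) (use pos in linarith)+
      show "c PA \<noteq> c PB" by (rule inj) (use pos in linarith)+
      show "inner (c PC - c PB) (c PA - c PB) > 0" using h2 by (simp add: inner_commute)
    qed
    then show ?thesis by (simp add: inner_commute)
  qed
  have qd: "inner (c PA - c PZ) (c PY - c PZ) > 0"
  proof -
    have "inner (c PY - c PZ) (c PA - c PZ) > 0"
    proof (rule mono2[where s = s and a = "c PX"])
      show "s * orient (c PZ) (c PY) (c PA) > 0" by (rule O) (use pos in linarith)+
      show "s * orient (c PZ) (c PA) (c PX) > 0" by (rule O) (use pos in linarith)+
      show "s * orient (c PZ) (c PY) (c PX) > 0" by (rule O) (use pos in linarith)+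
      show "c PY \<noteq> c PZ" by (rule inj) (use pos in linarith)+
      show "inner (c PX - c PZ) (c PY - c PZ) > 0" using h4 by (simp add: inner_commute)
    qed
    then show ?thesis by (simp add: inner_commute)
  qed
  show False
  proof (rule quad_contra[where s = s and a = "c PA" and b = "c PZ" and c = "c PY" and d = "c PB"])
    show "s * orient (c PA) (c PZ) (c PY) > 0" by (rule O) (use pos in linarith)+
    show "s * orient (c PA) (c PZ) (c PB) > 0" by (rule O) (use pos in linarith)+
    show "s * orient (c PA) (c PY) (c PB) > 0" by (rule O) (use pos in linarith)+
    show "s * orient (c PZ) (c PY) (c PB) > 0" by (rule O) (use pos in linarith)+
  qed (use qa qb qd h3 in auto)
qed

lemma geomB:
  fixes c :: "nat \<Rightarrow> pt"
  assumes cy: "cyc3 N s c" and inj: "\<And>p q. p < N \<Longrightarrow> q < N \<Longrightarrow> p \<noteq> q \<Longrightarrow> c p \<noteq> c q"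
    and pos: "PUB < PUC" "PUC \<le> PUY" "PUB \<le> PUY'" "PUY' < PUY" "PUY < PVX" "PVX \<le> PVAt" "PVAt < PVA" "PVA < N"
    and h1: "inner (c PVA - c PUB) (c PUC - c PUB) > 0"
    and h2: "inner (c PUB - c PVA) (c PVAt - c PVA) > 0"
    and h3: "inner (c PUY - c PVX) (c PVA - c PVX) > 0"
    and h4: "inner (c PVX - c PUY) (c PUY' - c PUY) > 0"
  shows False
proof -
  note O = cyc3D[OF cy]
  have qa: "inner (c PUY - c PUB) (c PVA - c PUB) > 0"
  proof (cases "PUC = PUY")
    case True then show ?thesis using h1 by (simp add: inner_commute)
  next
    case False
    have "inner (c PVA - c PUB) (c PUY - c PUB) > 0"
    proof (rule mono1[where s = s and c = "c PUC"])
      show "s * orient (c PUB) (c PUC) (c PUY) > 0" by (rule O) (use pos False in linarith)+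
      show "s * orient (c PUB) (c PUY) (c PVA) > 0" by (rule O) (use pos in linarith)+
      show "s * orient (c PUB) (c PUC) (c PVA) > 0" by (rule O) (use pos in linarith)+
      show "c PVA \<noteq> c PUB" by (rule inj) (use pos in linarith)+
    qed (rule h1)
    then show ?thesis by (simp add: inner_commute)
  qed
  have qb: "inner (c PUB - c PUY) (c PVX - c PUY) > 0"
  proof (cases "PUY' = PUB")
    case True then show ?thesis using h4 by (simp add: inner_commute)
  next
    case False
    have "inner (c PVX - c PUY) (c PUB - c PUY) > 0"
    proof (rule mono2[where s = s and a = "c PUY'"])
      show "s * orient (c PUY) (c PVX) (c PUB) > 0" by (rule O) (use pos in linarith)+
      show "s * orient (c PUY) (c PUB) (c PUY') > 0" by (rule O) (use pos False in linarith)+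
      show "s * orient (c PUY) (c PVX) (c PUY') > 0" by (rule O) (use pos in linarith)+
      show "c PVX \<noteq> c PUY" by (rule inj) (use pos in linarith)+
      show "inner (c PUY' - c PUY) (c PVX - c PUY) > 0" using h4 by (simp add: inner_commute)
    qed
    then show ?thesis by (simp add: inner_commute)
  qed
  have qd: "inner (c PVX - c PVA) (c PUB - c PVA) > 0"
  proof (cases "PVX = PVAt")
    case True then show ?thesis using h2 by (simp add: inner_commute)
  next
    case False
    have "inner (c PUB - c PVA) (c PVX - c PVA) > 0"
    proof (rule mono2[where s = s and a = "c PVAt"])
      show "s * orient (c PVA) (c PUB) (c PVX) > 0" by (rule O) (use pos in linarith)+
      show "s * orient (c PVA) (c PVX) (c PVAt) > 0" by (rule O) (use pos False in linarith)+
      show "s * orient (c PVA) (c PUB) (c PVAt) > 0" by (rule O) (use pos in linarith)+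
      show "c PUB \<noteq> c PVA" by (rule inj) (use pos in linarith)+
      show "inner (c PVAt - c PVA) (c PUB - c PVA) > 0" using h2 by (simp add: inner_commute)
    qed
    then show ?thesis by (simp add: inner_commute)
  qed
  show False
  proof (rule quad_contra[where s = s and a = "c PUB" and b = "c PUY" and c = "c PVX" and d = "c PVA"])
    show "s * orient (c PUB) (c PUY) (c PVX) > 0" by (rule O) (use pos in linarith)+
    show "s * orient (c PUB) (c PUY) (c PVA) > 0" by (rule O) (use pos in linarith)+
    show "s * orient (c PUB) (c PVX) (c PVA) > 0" by (rule O) (use pos in linarith)+
    show "s * orient (c PUY) (c PVX) (c PVA) > 0" by (rule O) (use pos in linarith)+
  qed (use qa qb qd h3 in auto)
qed

lemma list_less_nth:
  assumes "distinct xs" "i < length xs" "j < length xs"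
  shows "list_less xs (xs ! i) (xs ! j) \<longleftrightarrow> i < j"
  using assms unfolding list_less_def by (auto simp: nth_eq_iff_index_eq)

lemma list_less_in: "list_less xs a b \<Longrightarrow> a \<in> set xs \<and> b \<in> set xs"
  unfolding list_less_def by auto

lemma strict_total_list:
  assumes d: "distinct xs"
  shows "strict_total_on (set xs) (list_less xs)"
  unfolding strict_total_on_def
proof (intro conjI ballI impI)
  fix x assume "x \<in> set xs"
  then obtain i where i: "i < length xs" "xs ! i = x" by (auto simp: in_set_conv_nth)
  show "\<not> list_less xs x x" using list_less_nth[OF d i(1) i(1)] i by simp
next
  fix x y z assume xyz: "x \<in> set xs" "y \<in> set xs" "z \<in> set xs" and lt: "list_less xs x y \<and> list_less xs y z"
  obtain i where i: "i < length xs" "xs ! i = x" using xyz by (auto simp: in_set_conv_nth)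
  obtain j where j: "j < length xs" "xs ! j = y" using xyz by (auto simp: in_set_conv_nth)
  obtain k where k: "k < length xs" "xs ! k = z" using xyz by (auto simp: in_set_conv_nth)
  show "list_less xs x z" using lt list_less_nth[OF d i(1) j(1)] list_less_nth[OF d j(1) k(1)]
      list_less_nth[OF d i(1) k(1)] i j k by auto
next
  fix x y assume xy: "x \<in> set xs" "y \<in> set xs" "x \<noteq> y"
  obtain i where i: "i < length xs" "xs ! i = x" using xy by (auto simp: in_set_conv_nth)
  obtain j where j: "j < length xs" "xs ! j = y" using xy by (auto simp: in_set_conv_nth)
  have "i \<noteq> j" using i j xy by auto
  then show "list_less xs x y \<or> list_less xs y x"
    using list_less_nth[OF d i(1) j(1)] list_less_nth[OF d j(1) i(1)] i j by auto
qed

lemma main_comb: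
  fixes us vs :: "pt list" and E1 :: "(pt \<times> pt) set" and c :: "nat \<Rightarrow> pt"
  assumes dU: "distinct us" and dV: "distinct vs" and disj: "set us \<inter> set vs = {}"
    and E1sub: "E1 \<subseteq> set us \<times> set vs"
    and N: "N = length us + length vs + 2"
    and cu: "\<And>i. i < length us \<Longrightarrow> c (Suc i) = us ! i"
    and cv: "\<And>j. j < length vs \<Longrightarrow> c (N - Suc j) = vs ! j"
    and inj: "\<And>p q. p < N \<Longrightarrow> q < N \<Longrightarrow> p \<noteq> q \<Longrightarrow> c p \<noteq> c q"
    and cy: "cyc3 N s c"
    and F1: "\<And>u u' v. (u, v) \<in> E1 \<Longrightarrow> (u', v) \<in> E1 \<Longrightarrow> u \<noteq> u' \<Longrightarrow> inner (v - u) (u' - u) > 0"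
    and F2: "\<And>u v v'. (u, v) \<in> E1 \<Longrightarrow> (u, v') \<in> E1 \<Longrightarrow> v \<noteq> v' \<Longrightarrow> inner (u - v) (v' - v) > 0"
    and F3: "\<And>i j j'. i < length us \<Longrightarrow> j < length vs \<Longrightarrow> j' < j \<Longrightarrow> (us ! i, vs ! j) \<in> E1 \<Longrightarrow>
               inner (us ! i - vs ! j) (vs ! j' - vs ! j) > 0"
  shows "path_restricted (set us) (set vs) (list_less us) (list_less vs) (delete_max_edges (list_less us) E1)"
proof -
  define U where "U = set us"
  define V where "V = set vs"
  define G where "G = delete_max_edges (list_less us) E1"
  have Gsub: "G \<subseteq> E1" unfolding G_def delete_max_edges_def by auto
  have UV: "U \<inter> V = {}" using disj U_def V_def by simp
  have ob: "ordered_bipartite U V (list_less us) (list_less vs) G"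
    unfolding ordered_bipartite_def U_def V_def
    using disj Gsub E1sub strict_total_list[OF dU] strict_total_list[OF dV] by auto
  have idxU: "\<exists>i. i < length us \<and> us ! i = w" if "w \<in> U" for w
    using that unfolding U_def by (auto simp: in_set_conv_nth)
  have idxV: "\<exists>i. i < length vs \<and> vs ! i = w" if "w \<in> V" for w
    using that unfolding V_def by (auto simp: in_set_conv_nth)
  have lU: "list_less us (us ! i) (us ! j) \<longleftrightarrow> i < j" if "i < length us" "j < length us" for i j
    using list_less_nth[OF dU that] .
  have lV: "list_less vs (vs ! i) (vs ! j) \<longleftrightarrow> i < j" if "i < length vs" "j < length vs" for i j
    using list_less_nth[OF dV that] .
  have posU: "Suc i < N" if "i < length us" for i using that N by simp
  have posV: "N - Suc j < N" "length us < N - Suc j" if "j < length vs" for j using that N by auto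
  have nopath: "\<not> (\<exists>ws x. forward_path U V (list_less us) (list_less vs) G ws \<and> back_edge U V (list_less us) (list_less vs) G ws x)"
  proof
    assume "\<exists>ws x. forward_path U V (list_less us) (list_less vs) G ws \<and> back_edge U V (list_less us) (list_less vs) G ws x"
    then obtain ws x where fp: "forward_path U V (list_less us) (list_less vs) G ws"
      and be: "back_edge U V (list_less us) (list_less vs) G ws x" by blast
    have len: "2 \<le> length ws" and dws: "distinct ws"
      and alt: "\<And>i. Suc i < length ws \<Longrightarrow> ((ws ! i \<in> U \<and> ws ! Suc i \<in> V) \<or> (ws ! i \<in> V \<and> ws ! Suc i \<in> U))"
      and adj: "\<And>i. Suc i < length ws \<Longrightarrow> badj G (ws ! i) (ws ! Suc i)"
      and incU: "\<And>i j. i < j \<Longrightarrow> j < length ws \<Longrightarrow> ws ! i \<in> U \<Longrightarrow> ws ! j \<in> U \<Longrightarrow> list_less us (ws ! i) (ws ! j)"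
      and incV: "\<And>i j. i < j \<Longrightarrow> j < length ws \<Longrightarrow> ws ! i \<in> V \<Longrightarrow> ws ! j \<in> V \<Longrightarrow> list_less vs (ws ! i) (ws ! j)"
      using fp unfolding forward_path_def by blast+
    have b0: "badj G (ws ! 0) x" and bside: "if ws ! 0 \<in> U then x \<in> V else x \<in> U"
      and b1: "part_lt U (list_less us) (list_less vs) (ws ! 1) x"
      and bk: "\<exists>k < length ws. same_part U V (ws ! k) x \<and> (x = ws ! k \<or> part_lt U (list_less us) (list_less vs) x (ws ! k))"
      using be unfolding back_edge_def by blast+
    obtain k where k: "k < length ws" "same_part U V (ws ! k) x" "x = ws ! k \<or> part_lt U (list_less us) (list_less vs) x (ws ! k)"
      using bk by blast
    have GU: "a \<in> U" "b \<in> V" if "(a, b) \<in> G" for a b using that Gsub E1sub U_def V_def by auto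
    have E1U: "a \<in> U" "b \<in> V" if "(a, b) \<in> E1" for a b using that E1sub U_def V_def by auto
    have adj0: "badj G (ws ! 0) (ws ! 1)" using adj[of 0] len by simp
    have adj1: "2 < length ws \<Longrightarrow> badj G (ws ! 1) (ws ! 2)" using adj[of 1] by (simp add: numeral_2_eq_2)
    show False
    proof (cases "ws ! 0 \<in> U")
      case True
      have w1V: "ws ! 1 \<in> V" using alt[of 0] len True UV by auto
      have xV: "x \<in> V" using bside True by simp
      have e0x: "(ws ! 0, x) \<in> G" using b0 xV UV GU unfolding badj_def by blast
      have w1nU: "ws ! 1 \<notin> U" using w1V UV by auto
      have w1x: "list_less vs (ws ! 1) x" using b1 unfolding part_lt_def using if_not_P[OF w1nU] by metis
      have wkV: "ws ! k \<in> V" using k(2) xV UV unfolding same_part_def by auto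
      have xk: "x = ws ! k \<or> list_less vs x (ws ! k)" using k(3) xV UV unfolding part_lt_def by (auto split: if_split_asm)
      have k0: "k \<noteq> 0" using wkV True UV by auto
      have k1: "k \<noteq> 1"
      proof
        assume "k = 1"
        then have "x = ws ! 1 \<or> list_less vs x (ws ! 1)" using xk by simp
        then show False using w1x strict_total_list[OF dV] w1V xV unfolding strict_total_on_def V_def by blast
      qed
      define k' where "k' = k - 1"
      have kS: "Suc k' = k" using k0 unfolding k'_def by simp
      have wk'U: "ws ! k' \<in> U" using alt[of k'] kS k(1) wkV UV by auto
      have k'1: "k' \<noteq> 1" using wk'U w1V UV by auto
      have k'0: "k' \<noteq> 0" using k1 kS by auto
      have k'2: "2 \<le> k'" using k'0 k'1 by linarith
      have w2U: "ws ! 2 \<in> U" using alt[of 1] w1V UV k(1) k'2 kS by (auto simp: numeral_2_eq_2)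
      have e01: "(ws ! 0, ws ! 1) \<in> G" using adj0 w1V UV GU unfolding badj_def by blast
      have l2: "2 < length ws" using k(1) k'2 kS by linarith
      have e21: "(ws ! 2, ws ! 1) \<in> G" using adj1[OF l2] w1V UV GU unfolding badj_def by blast
      have bk: "badj G (ws ! k') (ws ! k)" using adj[of k'] kS k(1) by simp
      have ek: "(ws ! k', ws ! k) \<in> G" using bk wkV UV GU unfolding badj_def by blast
      obtain z where z: "(z, ws ! k) \<in> E1" "list_less us (ws ! k') z"
        using ek unfolding G_def delete_max_edges_def by auto
      have o02: "list_less us (ws ! 0) (ws ! 2)" using incU[of 0 2] True w2U k(1) k'2 kS by auto
      have o2k: "ws ! 2 = ws ! k' \<or> list_less us (ws ! 2) (ws ! k')"
        using incU[of 2 k'] w2U wk'U k(1) k'2 kS by (cases "k' = 2") auto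
      obtain a where a: "a < length us" "us ! a = ws ! 0" using idxU True by blast
      obtain a2 where a2: "a2 < length us" "us ! a2 = ws ! 2" using idxU w2U by blast
      obtain xx where xx: "xx < length us" "us ! xx = ws ! k'" using idxU wk'U by blast
      have zU: "z \<in> U" using z(1) E1U by blast
      obtain zz where zz: "zz < length us" "us ! zz = z" using idxU zU by blast
      obtain b where b: "b < length vs" "vs ! b = ws ! 1" using idxV w1V by blast
      obtain cc where cc: "cc < length vs" "vs ! cc = x" using idxV xV by blast
      obtain y where y: "y < length vs" "vs ! y = ws ! k" using idxV wkV by blast
      have aa2: "a < a2" using o02 lU[OF a(1) a2(1)] a a2 by simp
      have a2xx: "a2 \<le> xx" using o2k lU[OF a2(1) xx(1)] a2 xx nth_eq_iff_index_eq[OF dU a2(1) xx(1)] by (cases "us ! a2 = us ! xx") auto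
      have xxzz: "xx < zz" using z(2) lU[OF xx(1) zz(1)] xx zz by simp
      have bcc: "b < cc" using w1x lV[OF b(1) cc(1)] b cc by simp
      have ccy: "cc \<le> y" using xk lV[OF cc(1) y(1)] cc y nth_eq_iff_index_eq[OF dV cc(1) y(1)] by (cases "vs ! cc = vs ! y") auto
      have m1: "(us ! a, vs ! b) \<in> E1" using e01 Gsub a b by auto
      have m2: "(us ! a2, vs ! b) \<in> E1" using e21 Gsub a2 b by auto
      have m3: "(us ! a, vs ! cc) \<in> E1" using e0x Gsub a cc by auto
      have m4: "(us ! xx, vs ! y) \<in> E1" using ek Gsub xx y by auto
      have m5: "(us ! zz, vs ! y) \<in> E1" using z(1) zz y by auto
      have h1: "inner (vs ! b - us ! a) (us ! a2 - us ! a) > 0"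
        by (rule F1[OF m1 m2]) (use aa2 a a2 nth_eq_iff_index_eq[OF dU a(1) a2(1)] in auto)
      have h2: "inner (us ! a - vs ! b) (vs ! cc - vs ! b) > 0"
        by (rule F2[OF m1 m3]) (use bcc b cc nth_eq_iff_index_eq[OF dV b(1) cc(1)] in auto)
      have h3: "inner (us ! zz - vs ! y) (vs ! b - vs ! y) > 0"
        by (rule F3[OF zz(1) y(1) _ m5]) (use bcc ccy in linarith)
      have h4: "inner (vs ! y - us ! zz) (us ! xx - us ! zz) > 0"
        by (rule F1[OF m5 m4]) (use xxzz xx zz nth_eq_iff_index_eq[OF dU xx(1) zz(1)] in auto)
      show False
      proof (rule geomA[where c = c and N = N and s = s and PA = "Suc a" and PAt = "Suc a2" and PX = "Suc xx"
            and PZ = "Suc zz" and PY = "N - Suc y" and PC = "N - Suc cc" and PB = "N - Suc b"])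
        show "cyc3 N s c" by (rule cy)
        show "\<And>p q. p < N \<Longrightarrow> q < N \<Longrightarrow> p \<noteq> q \<Longrightarrow> c p \<noteq> c q" by (rule inj)
        show "Suc a < Suc a2" using aa2 by simp
        show "Suc a2 \<le> Suc xx" using a2xx by simp
        show "Suc xx < Suc zz" using xxzz by simp
        show "Suc zz < N - Suc y" using zz(1) y(1) N by linarith
        show "N - Suc y \<le> N - Suc cc" using ccy by simp
        show "N - Suc cc < N - Suc b" using bcc cc(1) N by linarith
        show "N - Suc b < N" using N by simp
        show "inner (c (N - Suc b) - c (Suc a)) (c (Suc a2) - c (Suc a)) > 0"
          using h1 cu[OF a(1)] cu[OF a2(1)] cv[OF b(1)] by simp
        show "inner (c (Suc a) - c (N - Suc b)) (c (N - Suc cc) - c (N - Suc b)) > 0"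
          using h2 cu[OF a(1)] cv[OF cc(1)] cv[OF b(1)] by simp
        show "inner (c (Suc zz) - c (N - Suc y)) (c (N - Suc b) - c (N - Suc y)) > 0"
          using h3 cu[OF zz(1)] cv[OF y(1)] cv[OF b(1)] by simp
        show "inner (c (N - Suc y) - c (Suc zz)) (c (Suc xx) - c (Suc zz)) > 0"
          using h4 cu[OF zz(1)] cv[OF y(1)] cu[OF xx(1)] by simp
      qed
    next
      case False
      have w0V: "ws ! 0 \<in> V" and w1U: "ws ! 1 \<in> U" using alt[of 0] len False by auto
      have xU: "x \<in> U" using bside False by simp
      have ex0: "(x, ws ! 0) \<in> G" using b0 False GU unfolding badj_def by blast
      have w1x: "list_less us (ws ! 1) x" using b1 unfolding part_lt_def using if_P[OF w1U] by metis
      have wkU: "ws ! k \<in> U" using k(2) xU UV unfolding same_part_def by auto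
      have xk: "x = ws ! k \<or> list_less us x (ws ! k)" using k(3) xU unfolding part_lt_def by auto
      have k0: "k \<noteq> 0" by (rule notI) (use wkU False in simp)
      have k1: "k \<noteq> 1"
      proof
        assume "k = 1"
        then have "x = ws ! 1 \<or> list_less us x (ws ! 1)" using xk by simp
        then show False using w1x strict_total_list[OF dU] w1U xU unfolding strict_total_on_def U_def by blast
      qed
      define k' where "k' = k - 1"
      have kS: "Suc k' = k" using k0 unfolding k'_def by simp
      have wk'V: "ws ! k' \<in> V" using alt[of k'] kS k(1) wkU UV by auto
      have k'1: "k' \<noteq> 1" using wk'V w1U UV by auto
      have k'0: "k' \<noteq> 0" using k1 kS by auto
      have k'2: "2 \<le> k'" using k'0 k'1 by linarith
      define k'' where "k'' = k' - 1"
      have kS': "Suc k'' = k'" using k'2 unfolding k''_def by simp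
      have wk''U: "ws ! k'' \<in> U" using alt[of k''] kS' kS k(1) wk'V UV by auto
      have k''1: "1 \<le> k''" using k'2 kS' by linarith
      have w2V: "ws ! 2 \<in> V" using alt[of 1] w1U UV k(1) k'2 kS by (auto simp: numeral_2_eq_2)
      have e10: "(ws ! 1, ws ! 0) \<in> G" using adj0 False GU unfolding badj_def by blast
      have l2: "2 < length ws" using k(1) k'2 kS by linarith
      have e12: "(ws ! 1, ws ! 2) \<in> G" using adj1[OF l2] w2V UV GU unfolding badj_def by blast
      have bk1: "badj G (ws ! k'') (ws ! k')" using adj[of k''] kS' kS k(1) by simp
      have ek1: "(ws ! k'', ws ! k') \<in> G" using bk1 wk'V UV GU unfolding badj_def by blast
      have bk2: "badj G (ws ! k') (ws ! k)" using adj[of k'] kS k(1) by simp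
      have ek2: "(ws ! k, ws ! k') \<in> G" using bk2 wk'V UV GU unfolding badj_def by blast
      have o02: "list_less vs (ws ! 0) (ws ! 2)" using incV[of 0 2] w0V w2V k(1) k'2 kS by auto
      have o2k: "ws ! 2 = ws ! k' \<or> list_less vs (ws ! 2) (ws ! k')"
        using incV[of 2 k'] w2V wk'V k(1) k'2 kS by (cases "k' = 2") auto
      have o1k: "ws ! 1 = ws ! k'' \<or> list_less us (ws ! 1) (ws ! k'')"
        using incU[of 1 k''] w1U wk''U k(1) k''1 kS kS' by (cases "k'' = 1") auto
      have ok: "list_less us (ws ! k'') (ws ! k)" using incU[of k'' k] wk''U wkU k(1) kS kS' by auto
      obtain a where a: "a < length vs" "vs ! a = ws ! 0" using idxV w0V by blast
      obtain a2 where a2: "a2 < length vs" "vs ! a2 = ws ! 2" using idxV w2V by blast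
      obtain xx where xx: "xx < length vs" "vs ! xx = ws ! k'" using idxV wk'V by blast
      obtain b where b: "b < length us" "us ! b = ws ! 1" using idxU w1U by blast
      obtain cc where cc: "cc < length us" "us ! cc = x" using idxU xU by blast
      obtain y where y: "y < length us" "us ! y = ws ! k" using idxU wkU by blast
      obtain y' where y': "y' < length us" "us ! y' = ws ! k''" using idxU wk''U by blast
      have aa2: "a < a2" using o02 lV[OF a(1) a2(1)] a a2 by simp
      have a2xx: "a2 \<le> xx" using o2k lV[OF a2(1) xx(1)] a2 xx nth_eq_iff_index_eq[OF dV a2(1) xx(1)] by (cases "vs ! a2 = vs ! xx") auto
      have bcc: "b < cc" using w1x lU[OF b(1) cc(1)] b cc by simp
      have ccy: "cc \<le> y" using xk lU[OF cc(1) y(1)] cc y nth_eq_iff_index_eq[OF dU cc(1) y(1)] by (cases "us ! cc = us ! y") auto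
      have by': "b \<le> y'" using o1k lU[OF b(1) y'(1)] b y' nth_eq_iff_index_eq[OF dU b(1) y'(1)] by (cases "us ! b = us ! y'") auto
      have y'y: "y' < y" using ok lU[OF y'(1) y(1)] y' y by simp
      have m1: "(us ! b, vs ! a) \<in> E1" using e10 Gsub a b by auto
      have m2: "(us ! cc, vs ! a) \<in> E1" using ex0 Gsub a cc by auto
      have m3: "(us ! b, vs ! a2) \<in> E1" using e12 Gsub b a2 by auto
      have m4: "(us ! y, vs ! xx) \<in> E1" using ek2 Gsub y xx by auto
      have m5: "(us ! y', vs ! xx) \<in> E1" using ek1 Gsub y' xx by auto
      have h1: "inner (vs ! a - us ! b) (us ! cc - us ! b) > 0"
        by (rule F1[OF m1 m2]) (use bcc b cc nth_eq_iff_index_eq[OF dU b(1) cc(1)] in auto)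
      have h2: "inner (us ! b - vs ! a) (vs ! a2 - vs ! a) > 0"
        by (rule F2[OF m1 m3]) (use aa2 a a2 nth_eq_iff_index_eq[OF dV a(1) a2(1)] in auto)
      have h3: "inner (us ! y - vs ! xx) (vs ! a - vs ! xx) > 0"
        by (rule F3[OF y(1) xx(1) _ m4]) (use aa2 a2xx in linarith)
      have h4: "inner (vs ! xx - us ! y) (us ! y' - us ! y) > 0"
        by (rule F1[OF m4 m5]) (use y'y y y' nth_eq_iff_index_eq[OF dU y(1) y'(1)] in auto)
      show False
      proof (rule geomB[where c = c and N = N and s = s and PUB = "Suc b" and PUC = "Suc cc" and PUY = "Suc y"
            and PUY' = "Suc y'" and PVX = "N - Suc xx" and PVAt = "N - Suc a2" and PVA = "N - Suc a"])
        show "cyc3 N s c" by (rule cy)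
        show "\<And>p q. p < N \<Longrightarrow> q < N \<Longrightarrow> p \<noteq> q \<Longrightarrow> c p \<noteq> c q" by (rule inj)
        show "Suc b < Suc cc" using bcc by simp
        show "Suc cc \<le> Suc y" using ccy by simp
        show "Suc b \<le> Suc y'" using by' by simp
        show "Suc y' < Suc y" using y'y by simp
        show "Suc y < N - Suc xx" using y(1) xx(1) N by linarith
        show "N - Suc xx \<le> N - Suc a2" using a2xx by simp
        show "N - Suc a2 < N - Suc a" using aa2 a2(1) N by linarith
        show "N - Suc a < N" using N by simp
        show "inner (c (N - Suc a) - c (Suc b)) (c (Suc cc) - c (Suc b)) > 0"
          using h1 cv[OF a(1)] cu[OF b(1)] cu[OF cc(1)] by simp
        show "inner (c (Suc b) - c (N - Suc a)) (c (N - Suc a2) - c (N - Suc a)) > 0"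
          using h2 cv[OF a(1)] cu[OF b(1)] cv[OF a2(1)] by simp
        show "inner (c (Suc y) - c (N - Suc xx)) (c (N - Suc a) - c (N - Suc xx)) > 0"
          using h3 cu[OF y(1)] cv[OF xx(1)] cv[OF a(1)] by simp
        show "inner (c (N - Suc xx) - c (Suc y)) (c (Suc y') - c (Suc y)) > 0"
          using h4 cv[OF xx(1)] cu[OF y(1)] cu[OF y'(1)] by simp
      qed
    qed
  qed
  show ?thesis unfolding path_restricted_def using ob nopath unfolding U_def V_def G_def by blast
qed

lemma orient_swap23: "orient a c b = - orient a b c"
  by (cases a; cases b; cases c) (simp add: orient_def cross_def algebra_simps)

lemma pr_empty:
  assumes "distinct us" "distinct vs" "set us \<inter> set vs = {}"
  shows "path_restricted (set us) (set vs) (list_less us) (list_less vs) {}"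
proof -
  have "\<not> forward_path U V l1 l2 {} ws" for U V l1 l2 ws
  proof
    assume "forward_path U V l1 l2 {} ws"
    then have "2 \<le> length ws" "\<forall>i. Suc i < length ws \<longrightarrow> badj {} (ws ! i) (ws ! Suc i)"
      unfolding forward_path_def by auto
    then have "badj {} (ws ! 0) (ws ! Suc 0)" by auto
    then show False by (simp add: badj_def)
  qed
  then have nf: "\<not> (\<exists>ws x. forward_path (set us) (set vs) (list_less us) (list_less vs) {} ws \<and>
      back_edge (set us) (set vs) (list_less us) (list_less vs) {} ws x)" by blast
  show ?thesis unfolding path_restricted_def ordered_bipartite_def
    using nf assms strict_total_list[of us] strict_total_list[of vs] by simp
qed

lemma first_part:
  fixes P :: "pt set" and E :: "pt set set" and pa pb :: pt
    and us vs :: "pt list" and E1 :: "(pt \<times> pt) set"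
  assumes ci: "convexly_independent P"
    and lg: "locally_gabriel P E"
    and pne: "pa \<noteq> pb"
    and side: "(set us = {q \<in> P. cross (pb - pa) (q - pa) > 0} \<and>
          set vs = {q \<in> P. cross (pb - pa) (q - pa) < 0}) \<or>
         (set us = {q \<in> P. cross (pb - pa) (q - pa) < 0} \<and>
          set vs = {q \<in> P. cross (pb - pa) (q - pa) > 0})"
    and bU: "boundary_chain P (pa # us @ [pb])"
    and bV: "boundary_chain P (pa # vs @ [pb])"
    and E1s: "E1 \<subseteq> {(u, v). u \<in> set us \<and> v \<in> set vs \<and> {u, v} \<in> E}"
    and ang1: "\<forall>i j. i < length us \<and> 1 \<le> j \<and> j \<le> length vs \<and>
            (us ! i, (pa # vs @ [pb]) ! j) \<in> E1 \<longrightarrow>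
            angle3 (us ! i) ((pa # vs @ [pb]) ! j) ((pa # vs @ [pb]) ! (j - 1)) < pi / 2"
  shows "path_restricted (set us) (set vs) (list_less us) (list_less vs)
           (delete_max_edges (list_less us) E1)"
proof -
  define L where "L = pa # us @ [pb]"
  define M where "M = pa # vs @ [pb]"
  define n1 where "n1 = length us"
  define n2 where "n2 = length vs"
  have dL: "distinct L" and sL: "set L \<subseteq> P" using bU unfolding L_def boundary_chain_def by auto
  have dM: "distinct M" and sM: "set M \<subseteq> P" using bV unfolding M_def boundary_chain_def by auto
  have dU: "distinct us" using dL unfolding L_def by simp
  have dV: "distinct vs" using dM unfolding M_def by simp
  have p2U: "pb \<notin> set us" and p1U: "pa \<notin> set us" using dL unfolding L_def by auto
  obtain \<epsilon> :: real where eps: "\<epsilon> = 1 \<or> \<epsilon> = -1" "\<forall>q\<in>set us. \<epsilon> * orient pa pb q > 0"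
      "\<forall>q\<in>set vs. \<epsilon> * orient pa pb q < 0"
  proof (cases "set us = {q \<in> P. cross (pb - pa) (q - pa) > 0} \<and> set vs = {q \<in> P. cross (pb - pa) (q - pa) < 0}")
    case True
    show ?thesis by (rule that[of 1]) (use True in \<open>auto simp: orient_def\<close>)
  next
    case False
    then have "set us = {q \<in> P. cross (pb - pa) (q - pa) < 0} \<and> set vs = {q \<in> P. cross (pb - pa) (q - pa) > 0}"
      using side by blast
    show ?thesis by (rule that[of "-1"]) (use \<open>set us = _ \<and> set vs = _\<close> in \<open>auto simp: orient_def\<close>)
  qed
  have disj: "set us \<inter> set vs = {}" using eps by fastforce
  have E1sub: "E1 \<subseteq> set us \<times> set vs" using E1s by auto
  show ?thesis
  proof (cases "us = [] \<or> vs = []")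
    case True
    then have "E1 = {}" using E1sub by auto
    then have "delete_max_edges (list_less us) E1 = {}" unfolding delete_max_edges_def by simp
    then show ?thesis using pr_empty[OF dU dV disj] by simp
  next
    case False
    then have n1: "1 \<le> n1" and n2: "1 \<le> n2" unfolding n1_def n2_def by (auto simp: Suc_le_eq)
    have lenL: "length L = n1 + 2" unfolding L_def n1_def by simp
    have lenM: "length M = n2 + 2" unfolding M_def n2_def by simp
    have L0: "L ! 0 = pa" and L1: "L ! 1 = us ! 0" unfolding L_def using n1 n1_def by (auto simp: nth_append)
    have M0: "M ! 0 = pa" and M1: "M ! 1 = vs ! 0" unfolding M_def using n2 n2_def by (auto simp: nth_append)
    have Lend: "L ! (n1 + 1) = pb" unfolding L_def n1_def by (simp add: nth_append)
    have Mend: "M ! (n2 + 1) = pb" unfolding M_def n2_def by (simp add: nth_append)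
    have us0: "us ! 0 \<in> set us" and vs0: "vs ! 0 \<in> set vs" using False by auto
    have p1P: "pa \<in> P" and p2P: "pb \<in> P" using sL unfolding L_def by auto
    have u0P: "us ! 0 \<in> P" using sL us0 unfolding L_def by auto
    have v0P: "vs ! 0 \<in> P" using sM vs0 unfolding M_def by auto
    have p1V: "pa \<notin> set vs" "pb \<notin> set vs" using dM unfolding M_def by auto
    have heU: "hull_edge P (L ! 0) (L ! 1)" using bU lenL unfolding L_def[symmetric] boundary_chain_def by auto
    obtain t where t: "t = 1 \<or> t = -1" "Ed t P (L ! 0) (L ! 1)"
    proof -
      have "L ! 0 \<in> P" "L ! 1 \<in> P" using sL lenL nth_mem[of 0 L] nth_mem[of 1 L] by auto
      then show ?thesis using hull_edge_side[OF ci _ _ heU] that by blast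
    qed
    have "t * orient pa (us ! 0) pb > 0"
      using t(2) L0 L1 p2P p2U us0 pne unfolding Ed_def by auto
    moreover have "\<epsilon> * orient pa pb (us ! 0) > 0" using eps(2) us0 by auto
    ultimately have tU: "t = - \<epsilon>" using t(1) eps(1) orient_swap23[of pa pb "us ! 0"]
      by (auto simp: zero_less_mult_iff)
    have EdU: "Ed (- \<epsilon>) P (L ! i) (L ! Suc i)" if "Suc i < length L" for i
      by (rule chain_sign[OF bU[folded L_def] ci]) (use t tU eps(1) that in auto)
    have heV: "hull_edge P (M ! 0) (M ! 1)" using bV lenM unfolding M_def[symmetric] boundary_chain_def by auto
    obtain t' where t': "t' = 1 \<or> t' = -1" "Ed t' P (M ! 0) (M ! 1)"
    proof -
      have "M ! 0 \<in> P" "M ! 1 \<in> P" using sM lenM nth_mem[of 0 M] nth_mem[of 1 M] by auto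
      then show ?thesis using hull_edge_side[OF ci _ _ heV] that by blast
    qed
    have "t' * orient pa (vs ! 0) pb > 0"
      using t'(2) M0 M1 p2P p1V vs0 pne unfolding Ed_def by auto
    moreover have "\<epsilon> * orient pa pb (vs ! 0) < 0" using eps(3) vs0 by auto
    ultimately have tV: "t' = \<epsilon>" using t'(1) eps(1) orient_swap23[of pa pb "vs ! 0"]
      by (auto simp: zero_less_mult_iff mult_less_0_iff)
    have EdV: "Ed (- \<epsilon>) P (M ! Suc j) (M ! j)" if "Suc j < length M" for j
    proof -
      have "Ed \<epsilon> P (M ! j) (M ! Suc j)"
        by (rule chain_sign[OF bV[folded M_def] ci]) (use t' tV eps(1) that in auto)
      then show ?thesis by (rule Ed_swap)
    qed
    define N where "N = n1 + n2 + 2"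
    define c where "c k = (if k \<le> n1 then L ! k else M ! (N - k))" for k
    have cu: "c (Suc i) = us ! i" if "i < length us" for i
      using that unfolding c_def L_def n1_def by (simp add: nth_append)
    have cv: "c (N - Suc j) = vs ! j" if "j < length vs" for j
    proof -
      have "\<not> N - Suc j \<le> n1" "N - (N - Suc j) = Suc j" using that unfolding N_def n2_def by auto
      then show ?thesis unfolding c_def M_def using that by (simp add: nth_append)
    qed
    have cP: "c k \<in> P" if "k < N" for k
    proof (cases "k \<le> n1")
      case True
      then have "L ! k \<in> set L" using lenL by (intro nth_mem) simp
      then show ?thesis unfolding c_def using sL True by auto
    next
      case False
      then have "M ! (N - k) \<in> set M" using lenM that N_def by (intro nth_mem) simp
      then show ?thesis unfolding c_def using sM False by auto
    qed
    have cL: "c k \<in> set (pa # us)" if "k \<le> n1" for k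
      using that unfolding c_def L_def n1_def by (auto simp: nth_append nth_Cons' split: if_splits)
    have cM: "c k \<in> set (vs @ [pb])" if "n1 < k" "k < N" for k
    proof -
      have "N - k \<ge> 1" "N - k < length M" using that lenM unfolding N_def by auto
      then have "M ! (N - k) = (vs @ [pb]) ! (N - k - 1)" unfolding M_def by (cases "N - k") auto
      moreover have "N - k - 1 < length (vs @ [pb])" using that unfolding N_def n2_def by auto
      then have "(vs @ [pb]) ! (N - k - 1) \<in> set (vs @ [pb])" by (rule nth_mem)
      moreover have "c k = M ! (N - k)" unfolding c_def using that by simp
      ultimately show ?thesis by simp
    qed
    have LMdisj: "set (pa # us) \<inter> set (vs @ [pb]) = {}" using disj p1V p2U pne by auto
    have inj: "c p \<noteq> c q" if "p < N" "q < N" "p \<noteq> q" for p q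
    proof (cases "p \<le> n1")
      case True
      show ?thesis
      proof (cases "q \<le> n1")
        case True
        then show ?thesis using \<open>p \<le> n1\<close> that dL lenL unfolding c_def by (simp add: nth_eq_iff_index_eq)
      next
        case False
        then show ?thesis using cL[OF \<open>p \<le> n1\<close>] cM[of q] that LMdisj by auto
      qed
    next
      case False
      show ?thesis
      proof (cases "q \<le> n1")
        case True
        then show ?thesis using cL[OF True] cM[of p] that LMdisj False by auto
      next
        case False
        have "N - p < length M" "N - q < length M" "N - p \<noteq> N - q" using that \<open>\<not> p \<le> n1\<close> False lenM
          unfolding N_def by auto
        then show ?thesis using \<open>\<not> p \<le> n1\<close> False dM unfolding c_def by (simp add: nth_eq_iff_index_eq)
      qed
    qed
    have EdC: "Ed (- \<epsilon>) P (c i) (c (nx N i))" if "i < N" for i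
    proof (cases "i \<le> n1")
      case True
      have nxi: "nx N i = Suc i" using True unfolding nx_def N_def by auto
      have "c (Suc i) = L ! Suc i"
      proof (cases "Suc i \<le> n1")
        case True then show ?thesis unfolding c_def by simp
      next
        case False
        then have "Suc i = n1 + 1" using \<open>i \<le> n1\<close> by simp
        moreover have "N - Suc i = n2 + 1" using \<open>i \<le> n1\<close> False unfolding N_def by simp
        ultimately show ?thesis unfolding c_def using False Lend Mend by simp
      qed
      moreover have "Suc i < length L" using True lenL by simp
      moreover have "c i = L ! i" unfolding c_def using True by simp
      ultimately show ?thesis using EdU[of i] nxi by simp
    next
      case False
      define j where "j = N - Suc i"
      have Sj: "N - i = Suc j" using that unfolding j_def by simp
      have jl: "Suc j < length M" using False that lenM unfolding j_def N_def by simp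
      have ci: "c i = M ! Suc j" using False Sj unfolding c_def by simp
      have cn: "c (nx N i) = M ! j"
      proof (cases "Suc i < N")
        case True
        then have "nx N i = Suc i" unfolding nx_def by simp
        moreover have "\<not> Suc i \<le> n1" using False by simp
        ultimately show ?thesis unfolding c_def j_def by simp
      next
        case False
        then have "nx N i = 0" "j = 0" using that unfolding nx_def j_def by auto
        then show ?thesis unfolding c_def using L0 M0 by simp
      qed
      show ?thesis using EdV[OF jl] ci cn by simp
    qed
    have N3: "3 \<le> N" unfolding N_def using n1 n2 by simp
    have nxN: "nx N i < N" if "i < N" for i using that N3 unfolding nx_def by auto
    have cyo: "s * orient (c i) (c j) (c k) > 0" if "i < j" "j < k" "k < N" and s: "s = - \<epsilon>" for i j k s
    proof (rule cycle_orient[OF N3 _ that(1-3)])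
      fix i j assume ij: "i < N" "j < N" "j \<noteq> i" "j \<noteq> nx N i"
      have "c j \<in> P - {c i, c (nx N i)}" using cP[OF ij(2)] inj[OF ij(2,1,3)] inj[OF ij(2) nxN[OF ij(1)] ij(4)] by auto
      then show "s * orient (c i) (c (nx N i)) (c j) > 0" using EdC[OF ij(1)] s unfolding Ed_def by auto
    qed
    have cy: "cyc3 N (- \<epsilon>) c"
      unfolding cyc3_def
    proof (intro allI impI)
      fix p q r assume h: "p < N \<and> q < N \<and> r < N \<and> (p < q \<and> q < r \<or> q < r \<and> r < p \<or> r < p \<and> p < q)"
      then consider "p < q" "q < r" | "q < r" "r < p" | "r < p" "p < q" by blast
      then show "- \<epsilon> * orient (c p) (c q) (c r) > 0"
      proof cases
        case 1 then show ?thesis using cyo[of p q r] h by simp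
      next
        case 2 then show ?thesis using cyo[of q r p] h orient_cyc[of "c p" "c q" "c r"] by simp
      next
        case 3 then show ?thesis using cyo[of r p q] h orient_cyc[of "c r" "c p" "c q"] by simp
      qed
    qed
    have lgE: "angle3 x z y < pi / 2 \<and> angle3 x y z < pi / 2" if "{x, y} \<in> E" "{x, z} \<in> E" "y \<noteq> z" for x y z
      using lg that unfolding locally_gabriel_def by blast
    have F1: "inner (v - u) (u' - u) > 0" if "(u, v) \<in> E1" "(u', v) \<in> E1" "u \<noteq> u'" for u u' v
    proof -
      have "{v, u} \<in> E" "{v, u'} \<in> E" using that E1s by (auto simp: insert_commute)
      then have "angle3 v u u' < pi / 2" using lgE[of v u u'] that(3) by blast
      then show ?thesis by (rule angle_acute_inner)
    qed
    have F2: "inner (u - v) (v' - v) > 0" if "(u, v) \<in> E1" "(u, v') \<in> E1" "v \<noteq> v'" for u v v'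
    proof -
      have "{u, v} \<in> E" "{u, v'} \<in> E" using that E1s by auto
      then have "angle3 u v v' < pi / 2" using lgE[of u v v'] that(3) by blast
      then show ?thesis by (rule angle_acute_inner)
    qed
    have F3: "inner (us ! i - vs ! j) (vs ! j' - vs ! j) > 0"
      if ij: "i < length us" "j < length vs" "j' < j" "(us ! i, vs ! j) \<in> E1" for i j j'
    proof -
      have Mj: "M ! Suc j = vs ! j" unfolding M_def using ij by (simp add: nth_append)
      have Mj1: "M ! j = vs ! (j - 1)" unfolding M_def using ij by (cases j) (auto simp: nth_append)
      have "angle3 (us ! i) (M ! Suc j) (M ! (Suc j - 1)) < pi / 2"
        using ang1[rule_format, of i "Suc j"] ij Mj unfolding M_def[symmetric] by simp
      then have base: "inner (us ! i - vs ! j) (vs ! (j - 1) - vs ! j) > 0"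
        using Mj Mj1 angle_acute_inner by simp
      show ?thesis
      proof (cases "j' = j - 1")
        case True then show ?thesis using base by simp
      next
        case False
        then have jj: "j' < j - 1" using ij by linarith
        note O = cyc3D[OF cy]
        have pv: "c (N - Suc j) = vs ! j" "c (N - Suc (j - 1)) = vs ! (j - 1)" "c (N - Suc j') = vs ! j'"
          by (rule cv; use ij in linarith)+
        have pu: "c (Suc i) = us ! i" using cu ij by auto
        have ord: "Suc i < N - Suc j" "N - Suc j < N - Suc (j - 1)" "N - Suc (j - 1) < N - Suc j'" "N - Suc j' < N"
          using ij jj unfolding N_def n1_def n2_def by auto
        have "inner (c (Suc i) - c (N - Suc j)) (c (N - Suc j') - c (N - Suc j)) > 0"
        proof (rule mono1[where s = "- \<epsilon>" and c = "c (N - Suc (j - 1))"])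
          show "- \<epsilon> * orient (c (N - Suc j)) (c (N - Suc (j - 1))) (c (N - Suc j')) > 0"
            by (rule O) (use ord in linarith)+
          show "- \<epsilon> * orient (c (N - Suc j)) (c (N - Suc j')) (c (Suc i)) > 0"
            by (rule O) (use ord in linarith)+
          show "- \<epsilon> * orient (c (N - Suc j)) (c (N - Suc (j - 1))) (c (Suc i)) > 0"
            by (rule O) (use ord in linarith)+
          show "c (Suc i) \<noteq> c (N - Suc j)" by (rule inj) (use ord in linarith)+
          show "inner (c (Suc i) - c (N - Suc j)) (c (N - Suc (j - 1)) - c (N - Suc j)) > 0"
            using base pv pu by simp
        qed
        then show ?thesis using pv pu by simp
      qed
    qed
    show ?thesis
    proof (rule main_comb[where c = c and N = N and s = "- \<epsilon>"])
      show "distinct us" "distinct vs" "set us \<inter> set vs = {}" "E1 \<subseteq> set us \<times> set vs"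
        by (fact dU dV disj E1sub)+
      show "N = length us + length vs + 2" unfolding N_def n1_def n2_def by simp
      show "cyc3 N (- \<epsilon>) c" by (rule cy)
    qed (use cu cv inj F1 F2 F3 in auto)



  qed
qed

lemma list_less_rev: "list_less (rev xs) a b \<longleftrightarrow> list_less xs b a"
proof
  assume "list_less (rev xs) a b"
  then obtain i j where ij: "i < j" "j < length xs" "rev xs ! i = a" "rev xs ! j = b"
    unfolding list_less_def by auto
  then have "xs ! (length xs - Suc j) = b" "xs ! (length xs - Suc i) = a" by (auto simp: rev_nth)
  moreover have "length xs - Suc j < length xs - Suc i" "length xs - Suc i < length xs" using ij by auto
  ultimately show "list_less xs b a" unfolding list_less_def by blast
next
  assume "list_less xs b a"
  then obtain i j where ij: "i < j" "j < length xs" "xs ! i = b" "xs ! j = a"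
    unfolding list_less_def by auto
  then have "rev xs ! (length xs - Suc j) = a" "rev xs ! (length xs - Suc i) = b" by (auto simp: rev_nth)
  moreover have "length xs - Suc j < length xs - Suc i" "length xs - Suc i < length (rev xs)" using ij by auto
  ultimately show "list_less (rev xs) a b" unfolding list_less_def by blast
qed

lemma hull_edge_sym: "hull_edge P a b \<Longrightarrow> hull_edge P b a"
  unfolding hull_edge_def by metis

lemma boundary_chain_rev:
  assumes "boundary_chain P L" shows "boundary_chain P (rev L)"
  unfolding boundary_chain_def
proof (intro conjI allI impI)
  show "distinct (rev L)" "set (rev L) \<subseteq> P" using assms unfolding boundary_chain_def by auto
next
  fix i assume i: "Suc i < length (rev L)"
  define k where "k = length L - Suc (Suc i)"
  have k: "Suc k < length L" "length L - Suc i = Suc k" using i unfolding k_def by auto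
  have "hull_edge P (L ! k) (L ! Suc k)" using assms k unfolding boundary_chain_def by auto
  then have "hull_edge P (L ! Suc k) (L ! k)" by (rule hull_edge_sym)
  moreover have "rev L ! i = L ! Suc k" "rev L ! Suc i = L ! k" using i k unfolding k_def
    by (auto simp: rev_nth)
  ultimately show "hull_edge P (rev L ! i) (rev L ! Suc i)" by simp
qed

lemma cross_swap_pts: "cross (p1 - p2) (q - p2) = - cross (p2 - p1) (q - p1)"
  by (cases p1; cases p2; cases q) (simp add: cross_def algebra_simps)

theorem lemma2p2:
  fixes P :: "pt set" and E :: "pt set set" and p1 p2 :: pt
    and us vs :: "pt list" and E1 :: "(pt \<times> pt) set"
  assumes "finite P"
    and "convexly_independent P"
    and "locally_gabriel P E"
    and "antipodal P p1 p2" and "p1 \<noteq> p2"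
    and "(set us = {q \<in> P. cross (p2 - p1) (q - p1) > 0} \<and>
          set vs = {q \<in> P. cross (p2 - p1) (q - p1) < 0}) \<or>
         (set us = {q \<in> P. cross (p2 - p1) (q - p1) < 0} \<and>
          set vs = {q \<in> P. cross (p2 - p1) (q - p1) > 0})"
    and "boundary_chain P (p1 # us @ [p2])"
    and "boundary_chain P (p1 # vs @ [p2])"
    and "E1 \<subseteq> {(u, v). u \<in> set us \<and> v \<in> set vs \<and> {u, v} \<in> E}"
    and "\<forall>i j. i < length us \<and> 1 \<le> j \<and> j \<le> length vs \<and>
            (us ! i, (p1 # vs @ [p2]) ! j) \<in> E1 \<longrightarrow>
            angle3 (us ! i) ((p1 # vs @ [p2]) ! j) ((p1 # vs @ [p2]) ! (j - 1)) < pi / 2"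
    and "\<forall>i j. i < length us \<and> 1 \<le> j \<and> j \<le> length vs \<and>
            (us ! i, (p1 # vs @ [p2]) ! j) \<in>
               {(u, v). u \<in> set us \<and> v \<in> set vs \<and> {u, v} \<in> E} - E1 \<longrightarrow>
            angle3 (us ! i) ((p1 # vs @ [p2]) ! j) ((p1 # vs @ [p2]) ! (j + 1)) < pi / 2"
  shows "path_restricted (set us) (set vs) (list_less us) (list_less vs)
           (delete_max_edges (list_less us) E1)
       \<and> path_restricted (set us) (set vs) (\<lambda>a b. list_less us b a) (\<lambda>a b. list_less vs b a)
           (delete_max_edges (\<lambda>a b. list_less us b a)
              ({(u, v). u \<in> set us \<and> v \<in> set vs \<and> {u, v} \<in> E} - E1))"
proof
  show "path_restricted (set us) (set vs) (list_less us) (list_less vs)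
           (delete_max_edges (list_less us) E1)"
    by (rule first_part[OF assms(2) assms(3) assms(5) assms(6) assms(7) assms(8) assms(9) assms(10)])
next
  define E' where "E' = {(u, v). u \<in> set us \<and> v \<in> set vs \<and> {u, v} \<in> E}"
  have lr: "(\<lambda>a b. list_less xs b a) = list_less (rev xs)" for xs :: "pt list"
    by (intro ext) (simp add: list_less_rev)
  have side': "(set (rev us) = {q \<in> P. cross (p1 - p2) (q - p2) > 0} \<and>
          set (rev vs) = {q \<in> P. cross (p1 - p2) (q - p2) < 0}) \<or>
         (set (rev us) = {q \<in> P. cross (p1 - p2) (q - p2) < 0} \<and>
          set (rev vs) = {q \<in> P. cross (p1 - p2) (q - p2) > 0})"
  proof -
    have eqs: "{q \<in> P. cross (p1 - p2) (q - p2) > 0} = {q \<in> P. cross (p2 - p1) (q - p1) < 0}"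
        "{q \<in> P. cross (p1 - p2) (q - p2) < 0} = {q \<in> P. cross (p2 - p1) (q - p1) > 0}"
      by (simp_all add: cross_swap_pts[of p1 p2])
    show ?thesis unfolding eqs set_rev using assms(6) by argo
  qed
  have bU': "boundary_chain P (p2 # rev us @ [p1])"
    using boundary_chain_rev[OF assms(7)] by simp
  have bV': "boundary_chain P (p2 # rev vs @ [p1])"
    using boundary_chain_rev[OF assms(8)] by simp
  have ang': "\<forall>i j. i < length (rev us) \<and> 1 \<le> j \<and> j \<le> length (rev vs) \<and>
            (rev us ! i, (p2 # rev vs @ [p1]) ! j) \<in> E' - E1 \<longrightarrow>
            angle3 (rev us ! i) ((p2 # rev vs @ [p1]) ! j) ((p2 # rev vs @ [p1]) ! (j - 1)) < pi / 2"
  proof (intro allI impI)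
    fix i j assume h: "i < length (rev us) \<and> 1 \<le> j \<and> j \<le> length (rev vs) \<and>
            (rev us ! i, (p2 # rev vs @ [p1]) ! j) \<in> E' - E1"
    have hj: "1 \<le> j" "j \<le> length vs" using h by auto
    define M where "M = p1 # vs @ [p2]"
    have RM: "p2 # rev vs @ [p1] = rev M" unfolding M_def by simp
    have lenM: "length M = length vs + 2" unfolding M_def by simp
    define i' where "i' = length us - Suc i"
    define j' where "j' = length vs + 1 - j"
    have ri: "rev us ! i = us ! i'" unfolding i'_def using h by (simp add: rev_nth)
    have rj: "rev M ! j = M ! j'" unfolding j'_def using h lenM by (simp add: rev_nth)
    have rj1: "rev M ! (j - 1) = M ! (j' + 1)"
    proof -
      have "rev M ! (j - 1) = M ! (length M - Suc (j - 1))" by (rule rev_nth) (use hj lenM in linarith)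
      also have "length M - Suc (j - 1) = j' + 1" using hj lenM unfolding j'_def by arith
      finally show ?thesis .
    qed
    have "i' < length us \<and> 1 \<le> j' \<and> j' \<le> length vs \<and> (us ! i', M ! j') \<in> E' - E1"
      using h ri rj RM unfolding i'_def j'_def by auto
    then have "angle3 (us ! i') (M ! j') (M ! (j' + 1)) < pi / 2"
      using assms(11) unfolding M_def E'_def by blast
    then show "angle3 (rev us ! i) ((p2 # rev vs @ [p1]) ! j) ((p2 # rev vs @ [p1]) ! (j - 1)) < pi / 2"
      using ri rj rj1 RM by simp
  qed
  have "path_restricted (set (rev us)) (set (rev vs)) (list_less (rev us)) (list_less (rev vs))
           (delete_max_edges (list_less (rev us)) (E' - E1))"
  proof -
    have pne': "p2 \<noteq> p1" using assms(5) by simp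
    have E1s': "E' - E1 \<subseteq> {(u, v). u \<in> set (rev us) \<and> v \<in> set (rev vs) \<and> {u, v} \<in> E}"
      unfolding E'_def by auto
    show ?thesis by (rule first_part[OF assms(2) assms(3) pne' side' bU' bV' E1s' ang'])
  qed
  then show "path_restricted (set us) (set vs) (\<lambda>a b. list_less us b a) (\<lambda>a b. list_less vs b a)
           (delete_max_edges (\<lambda>a b. list_less us b a)
              ({(u, v). u \<in> set us \<and> v \<in> set vs \<and> {u, v} \<in> E} - E1))"
    unfolding lr E'_def by simp
qed

end
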